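(* Let $R$ be a quotient root system, let $\Phi\subseteq R^+$ be an inversion set, and suppose $\Phi = \Phi_1 \sqcup \Phi_2$ with $\Phi_1,\Phi_2$ disjoint inversion sets. If $C$ is a connected component of $G_\Phi^{\Phi^c}$, then $C \subseteq \Phi_1$ or $C \subseteq \Phi_2$.
   Context: A quotient root system (QRS) $R$ is the set of non-zero images of a root system $\Delta$ (with base $\Sigma$) under the orthogonal projection of its ambient Euclidean space onto $(\mathrm{span}\,J)^\perp$ for some $J\subsetneq\Sigma$; its base consists of the images of $\Sigma\setminus J$, and every root is an integer combination of the base with all coefficients $\ge0$ (positive roots, $R^+$) or all $\le0$. A subset $\Phi\subseteq R^+$ is closed if $\alpha,\beta\in\Phi$, $\alpha+\beta\in R$ imply $\alpha+\beta\in\Phi$; co-closed if $\Phi^c:=R^+\setminus\Phi$ is closed; an inversion set if both. $G_\Phi^{\Phi^c}$ is the graph with vertex set $\Phi$ where $\alpha,\alpha'$ are adjacent iff $\alpha-\alpha'\in\Phi^c\cup(-\Phi^c)$. *)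

theory Defs
  imports "HOL-Analysis.Analysis"
begin

definition root_system :: "'a::euclidean_space set \<Rightarrow> bool" where
  "root_system \<Delta> \<longleftrightarrow>
     finite \<Delta> \<and> 0 \<notin> \<Delta> \<and> span \<Delta> = UNIV \<and>
     (\<forall>\<alpha>\<in>\<Delta>. \<forall>\<beta>\<in>\<Delta>. \<beta> - (2 * (\<beta> \<bullet> \<alpha>) / (\<alpha> \<bullet> \<alpha>)) *\<^sub>R \<alpha> \<in> \<Delta>) \<and>
     (\<forall>\<alpha>\<in>\<Delta>. \<forall>\<beta>\<in>\<Delta>. 2 * (\<beta> \<bullet> \<alpha>) / (\<alpha> \<bullet> \<alpha>) \<in> \<int>) \<and>
     (\<forall>\<alpha>\<in>\<Delta>. \<forall>c::real. c *\<^sub>R \<alpha> \<in> \<Delta> \<longrightarrow> c = 1 \<or> c = -1)"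

definition is_base :: "'a::euclidean_space set \<Rightarrow> 'a set \<Rightarrow> bool" where
  "is_base \<Delta> \<Sigma> \<longleftrightarrow>
     \<Sigma> \<subseteq> \<Delta> \<and> independent \<Sigma> \<and>
     (\<forall>\<alpha>\<in>\<Delta>. \<exists>c::'a \<Rightarrow> real. (\<forall>\<sigma>\<in>\<Sigma>. c \<sigma> \<in> \<int>) \<and>
        \<alpha> = (\<Sum>\<sigma>\<in>\<Sigma>. c \<sigma> *\<^sub>R \<sigma>) \<and>
        ((\<forall>\<sigma>\<in>\<Sigma>. c \<sigma> \<ge> 0) \<or> (\<forall>\<sigma>\<in>\<Sigma>. c \<sigma> \<le> 0)))"

definition qproj :: "'a::euclidean_space set \<Rightarrow> 'a \<Rightarrow> 'a" where
  "qproj J v = (THE w. w \<in> orthogonal_comp (span J) \<and> v - w \<in> span J)"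

definition qrs :: "'a::euclidean_space set \<Rightarrow> 'a set \<Rightarrow> 'a set" where
  "qrs \<Delta> J = qproj J ` \<Delta> - {0}"

definition qrs_pos :: "'a::euclidean_space set \<Rightarrow> 'a set \<Rightarrow> 'a set \<Rightarrow> 'a set" where
  "qrs_pos \<Delta> \<Sigma> J = {\<beta> \<in> qrs \<Delta> J. \<exists>c::'a \<Rightarrow> real.
      (\<forall>\<sigma>\<in>\<Sigma> - J. c \<sigma> \<in> \<int> \<and> c \<sigma> \<ge> 0) \<and> \<beta> = (\<Sum>\<sigma>\<in>\<Sigma> - J. c \<sigma> *\<^sub>R qproj J \<sigma>)}"

definition closed_in_rs :: "'a::real_vector set \<Rightarrow> 'a set \<Rightarrow> bool" where
  "closed_in_rs R \<Phi> \<longleftrightarrow> (\<forall>\<alpha>\<in>\<Phi>. \<forall>\<beta>\<in>\<Phi>. \<alpha> + \<beta> \<in> R \<longrightarrow> \<alpha> + \<beta> \<in> \<Phi>)"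

definition inversion_set :: "'a::real_vector set \<Rightarrow> 'a set \<Rightarrow> 'a set \<Rightarrow> bool" where
  "inversion_set R Rpos \<Phi> \<longleftrightarrow> \<Phi> \<subseteq> Rpos \<and> closed_in_rs R \<Phi> \<and> closed_in_rs R (Rpos - \<Phi>)"

text \<open>Adjacency in the graph G_\<Phi>^{\<Phi>^c} (vertex set \<Phi>).\<close>
definition G_adj :: "'a::real_vector set \<Rightarrow> 'a set \<Rightarrow> 'a \<Rightarrow> 'a \<Rightarrow> bool" where
  "G_adj Rpos \<Phi> \<alpha> \<alpha>' \<longleftrightarrow> \<alpha> \<in> \<Phi> \<and> \<alpha>' \<in> \<Phi> \<and>
     (\<alpha> - \<alpha>' \<in> Rpos - \<Phi> \<or> \<alpha> - \<alpha>' \<in> uminus ` (Rpos - \<Phi>))"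

definition G_component :: "'a::real_vector set \<Rightarrow> 'a set \<Rightarrow> 'a set \<Rightarrow> bool" where
  "G_component Rpos \<Phi> C \<longleftrightarrow> (\<exists>\<alpha>\<in>\<Phi>. C = {\<beta>. (G_adj Rpos \<Phi>)\<^sup>*\<^sup>* \<alpha> \<beta>})"

end

theory Submission
  imports Defs
begin

lemma adj_keep:
  assumes RR: "Rpos \<subseteq> R"
    and i1: "inversion_set R Rpos P1" and i2: "inversion_set R Rpos P2"
    and d: "P1 \<inter> P2 = {}" and P: "P = P1 \<union> P2"
    and a: "G_adj Rpos P x y" and x1: "x \<in> P1"
  shows "y \<in> P1"
proof (rule ccontr)
  assume ny: "y \<notin> P1"
  from a P ny have y2: "y \<in> P2" and yP: "y \<in> P" and xP: "x \<in> P" by (auto simp: G_adj_def)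
  from i1 i2 have s1: "P1 \<subseteq> Rpos" and s2: "P2 \<subseteq> Rpos"
    and c1: "closed_in_rs R (Rpos - P1)" and c2: "closed_in_rs R (Rpos - P2)"
    by (auto simp: inversion_set_def)
  from a consider (p) "x - y \<in> Rpos - P" | (m) "x - y \<in> uminus ` (Rpos - P)"
    by (auto simp: G_adj_def)
  then show False
  proof cases
    case p
    have "y \<in> Rpos - P1" using y2 s2 d by auto
    moreover have "x - y \<in> Rpos - P1" using p P by auto
    moreover have "y + (x - y) \<in> R" using xP P s1 s2 RR by auto
    ultimately have "y + (x - y) \<in> Rpos - P1" using c1 unfolding closed_in_rs_def by blast
    then show False using x1 by simp
  next
    case m
    then obtain g where g: "g \<in> Rpos - P" and e: "x - y = - g" by auto
    have "y = x + g" using e by (simp add: algebra_simps)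
    have "x \<in> Rpos - P2" using x1 s1 d by auto
    moreover have "g \<in> Rpos - P2" using g P by auto
    moreover have "x + g \<in> R" using \<open>y = x + g\<close> yP P s1 s2 RR by auto
    ultimately have "x + g \<in> Rpos - P2" using c2 unfolding closed_in_rs_def by blast
    then show False using y2 \<open>y = x + g\<close> by simp
  qed
qed

lemma comp_keep:
  assumes RR: "Rpos \<subseteq> R"
    and i1: "inversion_set R Rpos P1" and i2: "inversion_set R Rpos P2"
    and d: "P1 \<inter> P2 = {}" and P: "P = P1 \<union> P2"
    and r: "(G_adj Rpos P)\<^sup>*\<^sup>* x y" and x1: "x \<in> P1"
  shows "y \<in> P1"
  using r x1
proof (induction rule: rtranclp_induct)
  case base then show ?case by simp
next
  case (step y z) then show ?case using adj_keep[OF RR i1 i2 d P] by blast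
qed

theorem proposition4p2:
  fixes \<Delta> \<Sigma> J \<Phi> \<Phi>1 \<Phi>2 C :: "'a::euclidean_space set"
  assumes "root_system \<Delta>"
    and "is_base \<Delta> \<Sigma>"
    and "J \<subset> \<Sigma>"
    and "inversion_set (qrs \<Delta> J) (qrs_pos \<Delta> \<Sigma> J) \<Phi>"
    and "inversion_set (qrs \<Delta> J) (qrs_pos \<Delta> \<Sigma> J) \<Phi>1"
    and "inversion_set (qrs \<Delta> J) (qrs_pos \<Delta> \<Sigma> J) \<Phi>2"
    and "\<Phi>1 \<inter> \<Phi>2 = {}"
    and "\<Phi> = \<Phi>1 \<union> \<Phi>2"
    and "G_component (qrs_pos \<Delta> \<Sigma> J) \<Phi> C"
  shows "C \<subseteq> \<Phi>1 \<or> C \<subseteq> \<Phi>2"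
proof -
  have RR: "qrs_pos \<Delta> \<Sigma> J \<subseteq> qrs \<Delta> J" by (auto simp: qrs_pos_def)
  from assms(9) obtain x where x: "x \<in> \<Phi>" and C: "C = {\<beta>. (G_adj (qrs_pos \<Delta> \<Sigma> J) \<Phi>)\<^sup>*\<^sup>* x \<beta>}"
    by (auto simp: G_component_def)
  have d2: "\<Phi>2 \<inter> \<Phi>1 = {}" using assms(7) by blast
  have P2: "\<Phi> = \<Phi>2 \<union> \<Phi>1" using assms(8) by blast
  show ?thesis
  proof (cases "x \<in> \<Phi>1")
    case True
    then have "C \<subseteq> \<Phi>1" unfolding C using comp_keep[OF RR assms(5) assms(6) assms(7) assms(8)] by blast
    then show ?thesis ..
  next
    case False
    then have "x \<in> \<Phi>2" using x assms(8) by blast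
    then have "C \<subseteq> \<Phi>2" unfolding C using comp_keep[OF RR assms(6) assms(5) d2 P2] by blast
    then show ?thesis ..
  qed
qed

end
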